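(* Let $n,t\in\mathbb{N}$. Let $F$ be a $2$-regular graph on $n$ vertices all of whose cycles have length at least $30$. Let $n_1,\dots,n_t\in\mathbb{N}$ with $\sum_{i\in[t]}n_i=n$ and $n_i\ge50$ for all $i$. Then there exists $f:V(F)\to[t]$ such that (i) $|f^{-1}(i)|=n_i$ for all $i\in[t]$; (ii) $|f(x)-f(y)|\le1$ for all $xy\in E(F)$; (iii) the set $E$ of edges $xy\in E(F)$ with $f(x)\ne f(y)$ is an induced matching in $F$; (iv) for every $i\in[t-1]$ there are exactly four edges $xy\in E(F)$ with $\{f(x),f(y)\}=\{i,i+1\}$. *)

theory Defs
  imports Main
begin

definition simple_graph :: "'a set \<Rightarrow> 'a set set \<Rightarrow> bool" where
  "simple_graph V E \<longleftrightarrow> finite V \<and>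
     (\<forall>e\<in>E. \<exists>x y. x \<noteq> y \<and> x \<in> V \<and> y \<in> V \<and> e = {x, y})"

definition degree :: "'a set set \<Rightarrow> 'a \<Rightarrow> nat" where
  "degree E x = card {y. {x, y} \<in> E}"

definition two_regular :: "'a set \<Rightarrow> 'a set set \<Rightarrow> bool" where
  "two_regular V E \<longleftrightarrow> simple_graph V E \<and> (\<forall>x\<in>V. degree E x = 2)"

definition is_cycle :: "'a set \<Rightarrow> 'a set set \<Rightarrow> 'a list \<Rightarrow> bool" where
  "is_cycle V E cs \<longleftrightarrow> length cs \<ge> 3 \<and> distinct cs \<and> set cs \<subseteq> V \<and>
     (\<forall>i < length cs. {cs ! i, cs ! ((i + 1) mod length cs)} \<in> E)"

definition induced_matching :: "'a set set \<Rightarrow> 'a set set \<Rightarrow> bool" where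
  "induced_matching E M \<longleftrightarrow> M \<subseteq> E \<and>
     (\<forall>e\<in>M. \<forall>e'\<in>M. e \<noteq> e' \<longrightarrow> e \<inter> e' = {} \<and> (\<forall>x\<in>e. \<forall>y\<in>e'. {x, y} \<notin> E))"

end

theory Submission
  imports Defs
begin


definition good :: "nat set \<Rightarrow> nat \<Rightarrow> bool" where
  "good S c \<longleftrightarrow> (\<forall>s\<in>S. s + 2 < c \<or> c + 2 < s)"

definition SE :: "nat set \<Rightarrow> nat \<Rightarrow> (nat \<times> nat) set" where
  "SE S n = {(a,b). b < n \<and> ((b = a+2 \<and> (\<forall>s\<in>S. \<not>(a < s \<and> s \<le> b))) \<or> (b = a+1 \<and> (a\<in>S \<or> a+2 \<in> S)))}"

lemma SE_mem: "(a,b) \<in> SE S n \<longleftrightarrow> b < n \<and> ((b = a+2 \<and> (\<forall>s\<in>S. \<not>(a < s \<and> s \<le> b))) \<or> (b = a+1 \<and> (a\<in>S \<or> a+2 \<in> S)))"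
  unfolding SE_def by simp

lemma good_range: "0 \<in> S \<Longrightarrow> n \<in> S \<Longrightarrow> good S c \<Longrightarrow> c \<le> n \<Longrightarrow> 3 \<le> c \<and> c + 3 \<le> n"
  unfolding good_def by force

lemma good_cut:
  assumes "0 \<in> S" "n \<in> S" "good S c" "c \<le> n"
  shows "(c-2,c) \<in> SE S n" "(c-1,c+1) \<in> SE S n" "(c-2,c-1) \<notin> SE S n" "(c-1,c) \<notin> SE S n" "(c,c+1) \<notin> SE S n"
proof -
  have r: "3 \<le> c" "c + 3 \<le> n" using good_range[OF assms] by auto
  have g: "\<And>s. s \<in> S \<Longrightarrow> s + 2 < c \<or> c + 2 < s" using assms(3) unfolding good_def by blast
  have g1: "\<forall>s\<in>S. \<not>(c-2 < s \<and> s \<le> c)" using g by fastforce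
  have g2: "\<forall>s\<in>S. \<not>(c-1 < s \<and> s \<le> c+1)" using g by fastforce
  have g3: "c-2 \<notin> S" "c-1 \<notin> S" "c \<notin> S" "c+1 \<notin> S" "c+2 \<notin> S"
    using g[of "c-2"] g[of "c-1"] g[of c] g[of "c+1"] g[of "c+2"] r by auto
  obtain d where d: "c = 3 + d" using le_Suc_ex[OF r(1)] by blast
  show "(c-2,c) \<in> SE S n" using r g1 unfolding SE_mem d by (simp add: eval_nat_numeral)
  show "(c-1,c+1) \<in> SE S n" using r g2 unfolding SE_mem d by (simp add: eval_nat_numeral)
  show "(c-2,c-1) \<notin> SE S n" using r g3 unfolding SE_mem d by (simp add: eval_nat_numeral)
  show "(c-1,c) \<notin> SE S n" using r g3 unfolding SE_mem d by (simp add: eval_nat_numeral)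
  show "(c,c+1) \<notin> SE S n" using r g3 unfolding SE_mem d by (simp add: eval_nat_numeral)
qed

definition gapped :: "nat set \<Rightarrow> bool" where
  "gapped S \<longleftrightarrow> (\<forall>s\<in>S. \<forall>s'\<in>S. s < s' \<longrightarrow> s + 30 \<le> s')"

lemma two_bad:
  assumes "gapped S" "\<exists>s\<in>S. c \<le> s + 2 \<and> s \<le> c + 2" "\<exists>s'\<in>S. c' \<le> s' + 2 \<and> s' \<le> c' + 2"
    "c + 5 \<le> c'" "c' \<le> c + 10"
  shows False
proof -
  obtain s s' where h: "s\<in>S" "s'\<in>S" "c \<le> s + 2" "s \<le> c + 2" "c' \<le> s' + 2" "s' \<le> c' + 2"
    using assms(2,3) by blast
  have "s < s'" using h assms(4,5) by linarith
  then have "s + 30 \<le> s'" using assms(1) h(1,2) unfolding gapped_def by blast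
  then show False using h assms(4,5) by linarith
qed

lemma cand:
  assumes "gapped S"
  shows "\<exists>c. c \<in> {m+20, m+25, m+30} \<and> good S c \<and> good S (c + D)"
proof (rule ccontr)
  assume H: "\<not> ?thesis"
  define P where "P c \<longleftrightarrow> (\<exists>s\<in>S. c \<le> s + 2 \<and> s \<le> c + 2)" for c
  have G: "good S c \<longleftrightarrow> \<not> P c" for c unfolding good_def P_def by force
  have B: "P c \<or> P (c + D)" if "c \<in> {m+20, m+25, m+30}" for c
    using H that unfolding G by blast
  have b: "\<not> (P c \<and> P c')" if "c + 5 \<le> c'" "c' \<le> c + 10" for c c'
    using two_bad[OF assms, of c c'] that unfolding P_def by blast
  have b1: "\<not> (P (m+20) \<and> P (m+25))" "\<not> (P (m+20) \<and> P (m+30))" "\<not> (P (m+25) \<and> P (m+30))"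
    by (rule b; simp)+
  have b2: "\<not> (P (m+20+D) \<and> P (m+25+D))" "\<not> (P (m+20+D) \<and> P (m+30+D))" "\<not> (P (m+25+D) \<and> P (m+30+D))"
    by (rule b; simp)+
  have "P (m+20) \<or> P (m+20+D)" "P (m+25) \<or> P (m+25+D)" "P (m+30) \<or> P (m+30+D)"
    using B by auto
  then show False using b1 b2 by blast
qed


lemma SE_lt: "(a,b) \<in> SE S n \<Longrightarrow> a < b \<and> b \<le> a + 2 \<and> b < n"
  unfolding SE_mem by auto

lemma good_straddle:
  assumes "0 \<in> S" "n \<in> S" "good S c" "c \<le> n" "(a,b) \<in> SE S n" "a < c" "c \<le> b"
  shows "(a,b) = (c-2,c) \<or> (a,b) = (c-1,c+1)"
proof -
  have "a < b" "b \<le> a + 2" using SE_lt[OF assms(5)] by auto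
  moreover have "(c-1,c) \<notin> SE S n" using good_cut[OF assms(1-4)] by auto
  ultimately have "(b = c \<and> a = c - 2) \<or> (b = c \<and> a = c - 1) \<or> (b = c + 1 \<and> a = c - 1)"
    using assms(6,7) by linarith
  then show ?thesis using \<open>(c-1,c) \<notin> SE S n\<close> assms(5) by auto
qed

locale partB =
  fixes S :: "nat set" and n t :: nat and ns :: "nat \<Rightarrow> nat"
  assumes S0: "0 \<in> S" and Sn: "n \<in> S" and gap: "gapped S" and t1: "1 \<le> t"
    and nsum: "(\<Sum>i=1..t. ns i) = n" and big: "\<forall>i\<in>{1..t}. 50 \<le> ns i"
begin

definition NN where "NN k = (\<Sum>i=1..k. ns i)"

primrec AA where
  "AA 0 = 0"
| "AA (Suc k) = (SOME c. c \<in> {AA k + 20, AA k + 25, AA k + 30} \<and> good S c \<and> good S (c + (n - NN (Suc k))))"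

definition DD where "DD k = AA k + (n - NN k)"
definition II where "II k = (if k < t then {AA k..<DD k} else {})"
definition lab where "lab p = 1 + card {k\<in>{1..<t}. p \<in> II k}"

lemma AA_step: "AA (Suc k) \<in> {AA k + 20, AA k + 25, AA k + 30} \<and> good S (AA (Suc k)) \<and> good S (AA (Suc k) + (n - NN (Suc k)))"
  unfolding AA.simps by (rule someI_ex[OF cand[OF gap]])

lemma AA_gap: "AA k + 20 \<le> AA (Suc k) \<and> AA (Suc k) \<le> AA k + 30"
  using AA_step[of k] by auto

lemma AA_mono: "j < j' \<Longrightarrow> AA j + 20 \<le> AA j'"
proof (induction j')
  case 0 then show ?case by simp
next
  case (Suc j')
  then show ?case using AA_gap[of j'] by (cases "j < j'") (auto simp: less_Suc_eq)
qed

lemma AA_mono_le: "j \<le> j' \<Longrightarrow> AA j \<le> AA j'"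
  using AA_mono[of j j'] by (cases "j = j'") auto

lemma AA_le: "AA k \<le> 30 * k"
proof (induction k)
  case (Suc k) then show ?case using AA_gap[of k] by simp
qed simp

lemma AA_ge: "20 * k \<le> AA k"
proof (induction k)
  case (Suc k) then show ?case using AA_gap[of k] by simp
qed simp

lemma NN_Suc: "NN (Suc k) = NN k + ns (Suc k)"
  unfolding NN_def by simp

lemma NN_ge: "k \<le> t \<Longrightarrow> 50 * k \<le> NN k"
proof (induction k)
  case 0 then show ?case by simp
next
  case (Suc k)
  then show ?case using big NN_Suc[of k] by force
qed

lemma NN_le: "k \<le> t \<Longrightarrow> NN k \<le> n"
  unfolding NN_def nsum[symmetric] by (rule sum_mono2) auto

lemma NN_t: "NN t = n" unfolding NN_def using nsum .

lemma NN_lt: "k < t \<Longrightarrow> NN k + 50 \<le> n"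
proof -
  assume k: "k < t"
  then have "50 \<le> ns (Suc k)" using big by auto
  then show ?thesis using NN_le[of "Suc k"] NN_Suc[of k] k by linarith
qed

lemma AA_le_NN: "k \<le> t \<Longrightarrow> AA k + 20 * k \<le> NN k"
  using AA_le[of k] NN_ge[of k] by linarith

lemma DD_gap_A: "k < t \<Longrightarrow> AA k + 50 \<le> DD k"
  unfolding DD_def using NN_lt[of k] by linarith

lemma DD_le: "k \<le> t \<Longrightarrow> DD k \<le> n"
  unfolding DD_def using AA_le_NN[of k] NN_le[of k] by linarith

lemma DD_step: "Suc k < t \<Longrightarrow> DD (Suc k) + 20 \<le> DD k"
  unfolding DD_def using NN_Suc[of k] NN_le[of "Suc k"] AA_gap[of k] big[rule_format, of "Suc k"]
  by auto

lemma DD_mono: "j < j' \<Longrightarrow> j' < t \<Longrightarrow> DD j' + 20 \<le> DD j"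
proof (induction j')
  case 0 then show ?case by simp
next
  case (Suc j')
  then show ?case using DD_step[of j'] by (cases "j < j'") (auto simp: less_Suc_eq)
qed

lemma DD_mono_le: "j \<le> j' \<Longrightarrow> j' < t \<Longrightarrow> DD j' \<le> DD j"
  using DD_mono[of j j'] by (cases "j = j'") auto

lemma AD: "j < t \<Longrightarrow> j' < t \<Longrightarrow> AA j + 50 \<le> DD j'"
proof -
  assume a: "j < t" "j' < t"
  then have "j \<le> t - 1" "j' \<le> t - 1" "t - 1 < t" by auto
  then show ?thesis using AA_mono_le[of j "t-1"] DD_mono_le[of j' "t-1"] DD_gap_A[of "t-1"] by linarith
qed

lemma good_A: "1 \<le> j \<Longrightarrow> good S (AA j)"
  using AA_step[of "j-1"] by auto

lemma good_D: "1 \<le> j \<Longrightarrow> good S (DD j)"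
  using AA_step[of "j-1"] unfolding DD_def by auto

lemma AA_n: "j \<le> t \<Longrightarrow> AA j \<le> n"
  using AA_le_NN[of j] NN_le[of j] by linarith

lemma II_sub: "j \<le> j' \<Longrightarrow> II j' \<subseteq> II j"
  unfolding II_def using AA_mono_le[of j j'] DD_mono_le[of j j'] by auto

lemma II_0: "II 0 = {0..<n}"
  using t1 unfolding II_def DD_def NN_def by auto

lemma LAB_if:
  assumes "1 \<le> i" "i \<le> t" "p \<in> II (i-1)" "p \<notin> II i"
  shows "lab p = i"
proof -
  have "{k\<in>{1..<t}. p \<in> II k} = {1..<i}"
  proof (intro set_eqI iffI)
    fix k assume k: "k \<in> {k\<in>{1..<t}. p \<in> II k}"
    have "k < i"
    proof (rule ccontr)
      assume "\<not> k < i"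
      then have "II k \<subseteq> II i" using II_sub by simp
      then show False using k assms(4) by auto
    qed
    then show "k \<in> {1..<i}" using k by auto
  next
    fix k assume k: "k \<in> {1..<i}"
    then have "k \<le> i - 1" by auto
    then have "II (i-1) \<subseteq> II k" using II_sub[of k "i-1"] by auto
    then show "k \<in> {k\<in>{1..<t}. p \<in> II k}" using k assms by auto
  qed
  then show ?thesis unfolding lab_def using assms(1) by simp
qed

lemma LAB:
  assumes "p < n" "1 \<le> i" "i \<le> t"
  shows "lab p = i \<longleftrightarrow> p \<in> II (i-1) \<and> p \<notin> II i"
proof
  assume "p \<in> II (i-1) \<and> p \<notin> II i"
  then show "lab p = i" using LAB_if assms by auto
next
  assume L: "lab p = i"
  define M where "M = {k. k \<le> t \<and> p \<in> II k}"
  have fin: "finite M" unfolding M_def by auto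
  have "0 \<in> M" unfolding M_def using II_0 assms(1) by auto
  then have ne: "M \<noteq> {}" by auto
  define m where "m = Max M"
  have mM: "m \<in> M" unfolding m_def using fin ne by simp
  have "m \<noteq> t" using mM unfolding M_def II_def by auto
  then have mt: "m < t" using mM unfolding M_def by auto
  have pm: "p \<in> II m" using mM unfolding M_def by auto
  have pm1: "p \<notin> II (Suc m)"
  proof
    assume "p \<in> II (Suc m)"
    then have "Suc m \<in> M" using mt unfolding M_def by auto
    then have "Suc m \<le> m" unfolding m_def using fin by simp
    then show False by simp
  qed
  have "lab p = Suc m" using LAB_if[of "Suc m" p] pm pm1 mt by simp
  then have "i = Suc m" using L by simp
  then show "p \<in> II (i-1) \<and> p \<notin> II i" using pm pm1 by simp
qed

lemma lab_A_below: "1 \<le> j \<Longrightarrow> j < t \<Longrightarrow> AA j - 20 \<le> p \<Longrightarrow> p < AA j \<Longrightarrow> lab p = j"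
proof -
  assume a: "1 \<le> j" "j < t" "AA j - 20 \<le> p" "p < AA j"
  have "AA (j-1) + 20 \<le> AA j" using AA_mono[of "j-1" j] a by simp
  moreover have "AA j < DD j" "DD j \<le> DD (j-1)" using DD_gap_A[of j] DD_mono_le[of "j-1" j] a by auto
  moreover have "AA j \<le> n" using AA_n[of j] a by simp
  ultimately show ?thesis using a LAB[of p j] unfolding II_def by auto
qed

lemma lab_A_above: "1 \<le> j \<Longrightarrow> j < t \<Longrightarrow> AA j \<le> p \<Longrightarrow> p < AA j + 20 \<Longrightarrow> lab p = j + 1"
proof -
  assume a: "1 \<le> j" "j < t" "AA j \<le> p" "p < AA j + 20"
  have "AA j + 50 \<le> DD j" using DD_gap_A[of j] a by simp
  moreover have "Suc j < t \<Longrightarrow> AA j + 20 \<le> AA (Suc j)" using AA_gap[of j] by simp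
  moreover have "DD j \<le> n" using DD_le[of j] a by simp
  ultimately show ?thesis using a LAB[of p "j+1"] unfolding II_def by auto
qed

lemma lab_D_below: "1 \<le> j \<Longrightarrow> j < t \<Longrightarrow> DD j - 20 \<le> p \<Longrightarrow> p < DD j \<Longrightarrow> lab p = j + 1"
proof -
  assume a: "1 \<le> j" "j < t" "DD j - 20 \<le> p" "p < DD j"
  have "AA j + 50 \<le> DD j" using DD_gap_A[of j] a by simp
  moreover have "Suc j < t \<Longrightarrow> DD (Suc j) + 20 \<le> DD j" using DD_step[of j] by simp
  moreover have "DD j \<le> n" using DD_le[of j] a by simp
  ultimately show ?thesis using a LAB[of p "j+1"] unfolding II_def by auto
qed

lemma lab_D_above: "1 \<le> j \<Longrightarrow> j < t \<Longrightarrow> DD j \<le> p \<Longrightarrow> p < DD j + 20 \<Longrightarrow> lab p = j"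
proof -
  assume a: "1 \<le> j" "j < t" "DD j \<le> p" "p < DD j + 20"
  have "AA (j-1) \<le> AA j" using AA_mono_le[of "j-1" j] by simp
  moreover have "AA j + 50 \<le> DD j" using DD_gap_A[of j] a by simp
  moreover have "DD j + 20 \<le> DD (j-1)" using DD_mono[of "j-1" j] a by simp
  moreover have "DD (j-1) \<le> n" using DD_le[of "j-1"] a by simp
  ultimately show ?thesis using a LAB[of p j] unfolding II_def by auto
qed

end


context partB begin

lemma nocut:
  assumes "a \<le> b" "\<forall>j\<in>{1..<t}. \<not>(a < AA j \<and> AA j \<le> b) \<and> \<not>(a < DD j \<and> DD j \<le> b)"
  shows "lab a = lab b"
proof -
  have "{k\<in>{1..<t}. a \<in> II k} = {k\<in>{1..<t}. b \<in> II k}"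
  proof (intro set_eqI)
    fix k
    show "k \<in> {k\<in>{1..<t}. a \<in> II k} \<longleftrightarrow> k \<in> {k\<in>{1..<t}. b \<in> II k}"
    proof (cases "k \<in> {1..<t}")
      case True
      then have "\<not>(a < AA k \<and> AA k \<le> b) \<and> \<not>(a < DD k \<and> DD k \<le> b)" using assms(2) by blast
      then have "(a \<in> {AA k..<DD k}) = (b \<in> {AA k..<DD k})" using assms(1) by auto
      then show ?thesis using True unfolding II_def by auto
    qed auto
  qed
  then show ?thesis unfolding lab_def by simp
qed

lemma cross:
  assumes "(a,b) \<in> SE S n" "lab a \<noteq> lab b"
  shows "\<exists>j\<in>{1..<t}. \<exists>c. (c = AA j \<or> c = DD j) \<and> ((a,b) = (c-2,c) \<or> (a,b) = (c-1,c+1))"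
proof -
  have ab: "a < b" using SE_lt[OF assms(1)] by auto
  obtain j where j: "j \<in> {1..<t}" and h: "(a < AA j \<and> AA j \<le> b) \<or> (a < DD j \<and> DD j \<le> b)"
    using nocut[of a b] ab assms(2) by force
  show ?thesis
  proof (cases "a < AA j \<and> AA j \<le> b")
    case True
    have "(a,b) = (AA j-2,AA j) \<or> (a,b) = (AA j-1,AA j+1)"
      using good_straddle[OF S0 Sn good_A[of j] AA_n[of j] assms(1)] True j by auto
    then show ?thesis using j by blast
  next
    case False
    then have F: "a < DD j \<and> DD j \<le> b" using h by auto
    have "(a,b) = (DD j-2,DD j) \<or> (a,b) = (DD j-1,DD j+1)"
      using good_straddle[OF S0 Sn good_D[of j] DD_le[of j] assms(1)] F j by auto
    then show ?thesis using j by blast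
  qed
qed

lemma near_lab:
  assumes "j \<in> {1..<t}" "c = AA j \<or> c = DD j" "(a,b) = (c-2,c) \<or> (a,b) = (c-1,c+1)"
  shows "{lab a, lab b} = {j, j+1} \<and> (lab a = lab b + 1 \<or> lab b = lab a + 1)"
proof -
  have j: "1 \<le> j" "j < t" using assms(1) by auto
  have A20: "20 \<le> AA j" using AA_ge[of j] j by linarith
  have D50: "AA j + 50 \<le> DD j" using DD_gap_A[of j] j by simp
  have c20: "20 \<le> c" using assms(2) A20 D50 by auto
  have ha: "c - 2 \<le> a" "a < c" and hb: "c \<le> b" "b < c + 2" using assms(3) c20 by auto
  show ?thesis
  proof (cases "c = AA j")
    case True
    have "lab a = j" by (rule lab_A_below[OF j]) (use ha True in linarith)+
    moreover have "lab b = j + 1" by (rule lab_A_above[OF j]) (use hb True in linarith)+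
    ultimately show ?thesis by auto
  next
    case False
    then have c: "c = DD j" using assms(2) by auto
    have "lab a = j + 1" by (rule lab_D_below[OF j]) (use ha c in linarith)+
    moreover have "lab b = j" by (rule lab_D_above[OF j]) (use hb c in linarith)+
    ultimately show ?thesis by auto
  qed
qed

lemma near_SE:
  assumes "j \<in> {1..<t}" "c = AA j \<or> c = DD j"
  shows "(c-2,c) \<in> SE S n \<and> (c-1,c+1) \<in> SE S n \<and> (c-2,c-1) \<notin> SE S n \<and> (c-1,c) \<notin> SE S n \<and> (c,c+1) \<notin> SE S n"
proof -
  have "good S c \<and> c \<le> n" using assms good_A[of j] good_D[of j] AA_n[of j] DD_le[of j] by auto
  then show ?thesis using good_cut[OF S0 Sn] by blast
qed

lemma cut_sep:
  assumes "j \<in> {1..<t}" "j' \<in> {1..<t}" "c = AA j \<or> c = DD j" "c' = AA j' \<or> c' = DD j'" "c \<noteq> c'"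
  shows "c + 20 \<le> c' \<or> c' + 20 \<le> c"
proof -
  have jj: "j < t" "j' < t" using assms(1,2) by auto
  have o: "j \<noteq> j' \<Longrightarrow> j < j' \<or> j' < j" by auto
  consider "c = AA j" "c' = AA j'" | "c = AA j" "c' = DD j'" | "c = DD j" "c' = AA j'" | "c = DD j" "c' = DD j'"
    using assms(3,4) by blast
  then show ?thesis
  proof cases
    case 1
    then have "j \<noteq> j'" using assms(5) by auto
    then show ?thesis using o AA_mono[of j j'] AA_mono[of j' j] 1 by auto
  next
    case 2 then show ?thesis using AD[OF jj] by simp
  next
    case 3 then show ?thesis using AD[of j' j] jj by simp
  next
    case 4
    then have "j \<noteq> j'" using assms(5) by auto
    then show ?thesis using o DD_mono[of j j'] DD_mono[of j' j] jj 4 by auto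
  qed
qed

lemma R1: "lab p \<in> {1..t}"
proof -
  have "card {k\<in>{1..<t}. p \<in> II k} \<le> card {1..<t}" by (rule card_mono) auto
  then show ?thesis unfolding lab_def using t1 by auto
qed

lemma card_II: "card (II k) = (if k < t then n - NN k else 0)"
  unfolding II_def DD_def by auto

lemma R2:
  assumes "i \<in> {1..t}"
  shows "card {p\<in>{0..<n}. lab p = i} = ns i"
proof -
  have i: "1 \<le> i" "i \<le> t" using assms by auto
  have sub0: "II (i-1) \<subseteq> {0..<n}" using II_sub[of 0 "i-1"] II_0 by simp
  have "{p\<in>{0..<n}. lab p = i} = II (i-1) - II i"
    using LAB[OF _ i] sub0 by auto
  moreover have "II i \<subseteq> II (i-1)" using II_sub by simp
  ultimately have "card {p\<in>{0..<n}. lab p = i} = card (II (i-1)) - card (II i)"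
    by (simp add: card_Diff_subset II_def)
  also have "\<dots> = ns i"
  proof -
    have NS: "NN i = NN (i-1) + ns i" using NN_Suc[of "i-1"] i by simp
    have "NN i \<le> n" using NN_le i by simp
    moreover have "i - 1 < t" using i by simp
    ultimately show ?thesis
    proof (cases "i < t")
      case False
      then have "i = t" using i by simp
      then show ?thesis unfolding card_II using NS NN_t \<open>i - 1 < t\<close> by simp
    next
      case True
      then show ?thesis unfolding card_II using NS \<open>NN i \<le> n\<close> \<open>i - 1 < t\<close> by simp
    qed
  qed
  finally show ?thesis .
qed

lemma R3:
  assumes "(a,b) \<in> SE S n"
  shows "\<bar>int (lab a) - int (lab b)\<bar> \<le> 1"
proof (cases "lab a = lab b")
  case False
  then obtain j c where jc: "j \<in> {1..<t}" "c = AA j \<or> c = DD j" "(a,b) = (c-2,c) \<or> (a,b) = (c-1,c+1)"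
    using cross[OF assms] by blast
  have "lab a = lab b + 1 \<or> lab b = lab a + 1" using near_lab[OF jc] by blast
  then show ?thesis by auto
qed simp

lemma R4:
  assumes "(a,b) \<in> SE S n" "lab a \<noteq> lab b" "(a',b') \<in> SE S n" "lab a' \<noteq> lab b'" "(a,b) \<noteq> (a',b')"
  shows "{a,b} \<inter> {a',b'} = {} \<and> (\<forall>p\<in>{a,b}. \<forall>q\<in>{a',b'}. (p,q) \<notin> SE S n \<and> (q,p) \<notin> SE S n)"
proof -
  obtain j c where jc: "j \<in> {1..<t}" "c = AA j \<or> c = DD j" "(a,b) = (c-2,c) \<or> (a,b) = (c-1,c+1)"
    using cross[OF assms(1,2)] by blast
  obtain j' c' where jc': "j' \<in> {1..<t}" "c' = AA j' \<or> c' = DD j'" "(a',b') = (c'-2,c') \<or> (a',b') = (c'-1,c'+1)"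
    using cross[OF assms(3,4)] by blast
  have c3: "3 \<le> c" "3 \<le> c'" using AA_ge[of j] AA_ge[of j'] DD_gap_A[of j] DD_gap_A[of j'] jc(1,2) jc'(1,2) by auto
  show ?thesis
  proof (cases "c = c'")
    case True
    have ns: "(c-2,c-1) \<notin> SE S n" "(c-1,c) \<notin> SE S n" "(c,c+1) \<notin> SE S n" using near_SE[OF jc(1,2)] by auto
    have far: "(c-2,c+1) \<notin> SE S n" using SE_lt[of "c-2" "c+1" S n] c3 by auto
    have ab: "((a,b) = (c-2,c) \<and> (a',b') = (c-1,c+1)) \<or> ((a,b) = (c-1,c+1) \<and> (a',b') = (c-2,c))"
      using jc(3) jc'(3) True assms(5) by auto
    obtain d0 where "c = 3 + d0" using le_Suc_ex[OF c3(1)] by blast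
    then obtain d where d: "c = Suc (Suc (Suc d))" by (simp add: eval_nat_numeral)
    have ns': "(Suc d, Suc (Suc d)) \<notin> SE S n" "(Suc (Suc d), Suc (Suc (Suc d))) \<notin> SE S n"
      "(Suc (Suc (Suc d)), Suc (Suc (Suc (Suc d)))) \<notin> SE S n" "(Suc d, Suc (Suc (Suc (Suc d)))) \<notin> SE S n"
      using ns far unfolding d by (simp_all add: eval_nat_numeral)
    have ab': "((a,b) = (Suc d, Suc (Suc (Suc d))) \<and> (a',b') = (Suc (Suc d), Suc (Suc (Suc (Suc d))))) \<or>
      ((a,b) = (Suc (Suc d), Suc (Suc (Suc (Suc d)))) \<and> (a',b') = (Suc d, Suc (Suc (Suc d))))"
      using ab unfolding d by (simp add: eval_nat_numeral)
    have rv: "(x,y) \<notin> SE S n" if "y \<le> x" for x y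
    proof
      assume "(x,y) \<in> SE S n" then show False using SE_lt[OF \<open>(x,y) \<in> SE S n\<close>] that by simp
    qed
    show ?thesis
    proof (rule disjE[OF ab'])
      assume h: "(a,b) = (Suc d, Suc (Suc (Suc d))) \<and> (a',b') = (Suc (Suc d), Suc (Suc (Suc (Suc d))))"
      then show ?thesis using ns' rv by auto
    next
      assume h: "(a,b) = (Suc (Suc d), Suc (Suc (Suc (Suc d)))) \<and> (a',b') = (Suc d, Suc (Suc (Suc d)))"
      then show ?thesis using ns' rv by auto
    qed
  next
    case False
    have sep: "c + 20 \<le> c' \<or> c' + 20 \<le> c" using cut_sep[OF jc(1) jc'(1) jc(2) jc'(2) False] .
    have pos: "c - 2 \<le> a \<and> b \<le> c + 1 \<and> c' - 2 \<le> a' \<and> b' \<le> c' + 1 \<and> a \<le> b \<and> a' \<le> b'" using jc(3) jc'(3) by auto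
    have far: "(x,y) \<notin> SE S n" if "y \<le> x \<or> x + 3 \<le> y" for x y using SE_lt[of x y S n] that by auto
    show ?thesis
    proof (cases "c + 20 \<le> c'")
      case True
      then have h: "a + 3 \<le> a'" "a + 3 \<le> b'" "b + 3 \<le> a'" "b + 3 \<le> b'" using pos by auto
      have "(a,a') \<notin> SE S n" "(a,b') \<notin> SE S n" "(b,a') \<notin> SE S n" "(b,b') \<notin> SE S n"
        "(a',a) \<notin> SE S n" "(b',a) \<notin> SE S n" "(a',b) \<notin> SE S n" "(b',b) \<notin> SE S n"
        using h by (auto intro!: far)
      then show ?thesis using h by auto
    next
      case False
      then have h: "a' + 3 \<le> a" "a' + 3 \<le> b" "b' + 3 \<le> a" "b' + 3 \<le> b" using pos sep by auto
      have "(a,a') \<notin> SE S n" "(a,b') \<notin> SE S n" "(b,a') \<notin> SE S n" "(b,b') \<notin> SE S n"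
        "(a',a) \<notin> SE S n" "(b',a) \<notin> SE S n" "(a',b) \<notin> SE S n" "(b',b) \<notin> SE S n"
        using h by (auto intro!: far)
      then show ?thesis using h by auto
    qed
  qed
qed

lemma R5:
  assumes "i \<in> {1..<t}"
  shows "card {(a,b)\<in>SE S n. {lab a, lab b} = {i, i+1}} = 4"
proof -
  have eq: "{(a,b)\<in>SE S n. {lab a, lab b} = {i, i+1}} =
     {(AA i - 2, AA i), (AA i - 1, AA i + 1), (DD i - 2, DD i), (DD i - 1, DD i + 1)}"
  proof (intro set_eqI iffI)
    fix x assume x: "x \<in> {(a,b)\<in>SE S n. {lab a, lab b} = {i, i+1}}"
    then obtain a b where ab: "x = (a,b)" "(a,b) \<in> SE S n" "{lab a, lab b} = {i, i+1}" by auto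
    have "lab a \<noteq> lab b"
    proof
      assume e: "lab a = lab b"
      have "i \<in> {lab a, lab b}" "i+1 \<in> {lab a, lab b}" using ab(3) by auto
      then show False using e by auto
    qed
    then obtain j c where jc: "j \<in> {1..<t}" "c = AA j \<or> c = DD j" "(a,b) = (c-2,c) \<or> (a,b) = (c-1,c+1)"
      using cross[OF ab(2)] by blast
    have "{j, j+1} = {i, i+1}" using near_lab[OF jc] ab(3) by simp
    then have "j = i" by (auto simp: doubleton_eq_iff)
    then show "x \<in> {(AA i - 2, AA i), (AA i - 1, AA i + 1), (DD i - 2, DD i), (DD i - 1, DD i + 1)}"
      using jc ab(1) by auto
  next
    fix x assume x: "x \<in> {(AA i - 2, AA i), (AA i - 1, AA i + 1), (DD i - 2, DD i), (DD i - 1, DD i + 1)}"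
    then obtain c a b where c: "c = AA i \<or> c = DD i" "(a,b) = (c-2,c) \<or> (a,b) = (c-1,c+1)" "x = (a,b)" by auto
    have "(a,b) \<in> SE S n" using near_SE[OF assms c(1)] c(2) by auto
    moreover have "{lab a, lab b} = {i,i+1}" using near_lab[OF assms c(1,2)] by simp
    ultimately show "x \<in> {(a,b)\<in>SE S n. {lab a, lab b} = {i, i+1}}" using c(3) by simp
  qed
  have i: "1 \<le> i" "i < t" using assms by auto
  have "20 \<le> AA i" "AA i + 50 \<le> DD i" using AA_ge[of i] DD_gap_A[of i] i by auto
  then have ne: "AA i - 2 \<noteq> AA i - 1" "AA i - 2 \<noteq> DD i - 2" "AA i - 2 \<noteq> DD i - 1"
    "AA i - 1 \<noteq> DD i - 2" "AA i - 1 \<noteq> DD i - 1" "DD i - 2 \<noteq> DD i - 1" by linarith+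
  show ?thesis unfolding eq using ne by simp
qed

lemma partB_main:
  "\<exists>lab. (\<forall>p. lab p \<in> {1..t}) \<and> (\<forall>i\<in>{1..t}. card {p\<in>{0..<n}. lab p = i} = ns i) \<and>
     (\<forall>a b. (a,b) \<in> SE S n \<longrightarrow> \<bar>int (lab a) - int (lab b)\<bar> \<le> 1) \<and>
     (\<forall>a b a' b'. (a,b) \<in> SE S n \<longrightarrow> lab a \<noteq> lab b \<longrightarrow> (a',b') \<in> SE S n \<longrightarrow> lab a' \<noteq> lab b' \<longrightarrow> (a,b) \<noteq> (a',b') \<longrightarrow>
        {a,b} \<inter> {a',b'} = {} \<and> (\<forall>p\<in>{a,b}. \<forall>q\<in>{a',b'}. (p,q) \<notin> SE S n \<and> (q,p) \<notin> SE S n)) \<and>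
     (\<forall>i\<in>{1..<t}. card {(a,b)\<in>SE S n. {lab a, lab b} = {i, i+1}} = 4)"
  using R1 R2 R3 R4 R5 by blast

end

lemma partB_ex:
  assumes "0 \<in> S" "n \<in> S" "gapped S" "1 \<le> t" "(\<Sum>i=1..t. ns i) = n" "\<forall>i\<in>{1..t}. 50 \<le> ns i"
  shows "\<exists>lab. (\<forall>p. lab p \<in> {1..t}) \<and> (\<forall>i\<in>{1..t}. card {p\<in>{0..<n}. lab p = i} = ns i) \<and>
     (\<forall>a b. (a,b) \<in> SE S n \<longrightarrow> \<bar>int (lab a) - int (lab b)\<bar> \<le> 1) \<and>
     (\<forall>a b a' b'. (a,b) \<in> SE S n \<longrightarrow> lab a \<noteq> lab b \<longrightarrow> (a',b') \<in> SE S n \<longrightarrow> lab a' \<noteq> lab b' \<longrightarrow> (a,b) \<noteq> (a',b') \<longrightarrow>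
        {a,b} \<inter> {a',b'} = {} \<and> (\<forall>p\<in>{a,b}. \<forall>q\<in>{a',b'}. (p,q) \<notin> SE S n \<and> (q,p) \<notin> SE S n)) \<and>
     (\<forall>i\<in>{1..<t}. card {(a,b)\<in>SE S n. {lab a, lab b} = {i, i+1}} = 4)"
proof -
  interpret partB S n t ns using assms by unfold_locales
  show ?thesis by (rule partB_main)
qed


definition zi :: "nat \<Rightarrow> nat \<Rightarrow> nat" where
  "zi L k = (if 2 dvd k then k div 2 else L - 1 - k div 2)"

lemma zi_even: "zi L (2*q) = q" unfolding zi_def by simp
lemma zi_odd: "zi L (2*q+1) = L - 1 - q" unfolding zi_def by simp

lemma zi_lt: "a < L \<Longrightarrow> zi L a < L"
  unfolding zi_def using div_le_dividend[of a 2] by auto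

lemma zi_inj: "a < L \<Longrightarrow> b < L \<Longrightarrow> zi L a = zi L b \<Longrightarrow> a = b"
proof -
  assume h: "a < L" "b < L" "zi L a = zi L b"
  obtain q where q: "a = 2*q \<or> a = 2*q+1" by (metis oddE evenE)
  obtain r where r: "b = 2*r \<or> b = 2*r+1" by (metis oddE evenE)
  show "a = b"
  proof (cases "a = 2*q")
    case True
    show ?thesis
    proof (cases "b = 2*r")
      case True
      then show ?thesis using \<open>a = 2*q\<close> h zi_even[of L q] zi_even[of L r] by simp
    next
      case False
      then have b: "b = 2*r+1" using r by simp
      then have "q = L - 1 - r" using \<open>a = 2*q\<close> h zi_even[of L q] zi_odd[of L r] by simp
      then show ?thesis using \<open>a = 2*q\<close> b h by linarith
    qed
  next
    case False
    then have a: "a = 2*q+1" using q by simp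
    show ?thesis
    proof (cases "b = 2*r")
      case True
      then have "r = L - 1 - q" using a h zi_even[of L r] zi_odd[of L q] by simp
      then show ?thesis using True a h by linarith
    next
      case False
      then have b: "b = 2*r+1" using r by simp
      then have "L - 1 - q = L - 1 - r" using a h zi_odd[of L q] zi_odd[of L r] by simp
      then show ?thesis using a b h by linarith
    qed
  qed
qed

lemma Z1: "b < L \<Longrightarrow> 4 \<le> L \<Longrightarrow> (b = a+2 \<or> (b = a+1 \<and> (a = 0 \<or> a+2 = L))) \<Longrightarrow>
  \<exists>j<L. (zi L a = j \<and> zi L b = (if j+1<L then j+1 else 0)) \<or> (zi L b = j \<and> zi L a = (if j+1<L then j+1 else 0))"
proof -
  assume h: "b < L" "4 \<le> L" "b = a+2 \<or> (b = a+1 \<and> (a = 0 \<or> a+2 = L))"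
  obtain q where q: "a = 2*q \<or> a = 2*q+1" by (metis oddE evenE)
  consider "b = a+2" "a = 2*q" | "b = a+2" "a = 2*q+1" | "b = a+1" "a = 0" | "b = a+1" "a + 2 = L" "a = 2*q" | "b = a+1" "a + 2 = L" "a = 2*q+1" "a \<noteq> 0"
    using h q by blast
  then show ?thesis
  proof cases
    case 1
    then have "zi L a = q" "zi L b = q + 1" "q + 1 < L" using zi_even[of L q] zi_even[of L "q+1"] h by simp_all
    then show ?thesis by (intro exI[of _ q]) simp
  next
    case 2
    have e: "L - 1 - q = (L - 2 - q) + 1" "L - 1 - (q+1) = L - 2 - q" "L - 2 - q + 1 < L" using h 2 by arith+
    have "b = 2*(q+1)+1" using 2 by simp
    then have "zi L a = (L - 2 - q) + 1" "zi L b = L - 2 - q" using zi_odd[of L q] zi_odd[of L "q+1"] 2 e by simp_all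
    then show ?thesis using e by (intro exI[of _ "L - 2 - q"]) simp
  next
    case 3
    have "zi L 0 = 0" "zi L 1 = L - 1" using zi_even[of L 0] zi_odd[of L 0] by simp_all
    then show ?thesis using 3 h by (intro exI[of _ "L - 1"]) simp
  next
    case 4
    have "b = 2*q+1" using 4 by simp
    then have "zi L a = q" "zi L b = q + 1" "q + 1 < L" using zi_even[of L q] zi_odd[of L q] 4 by simp_all
    then show ?thesis by (intro exI[of _ q]) simp
  next
    case 5
    have "b = 2*(q+1)" using 5 by simp
    then have "zi L a = q + 2" "zi L b = q + 1" "q + 2 < L" using zi_even[of L "q+1"] zi_odd[of L q] 5 by simp_all
    then show ?thesis by (intro exI[of _ "q+1"]) simp
  qed
qed

lemma Z2: "j < L \<Longrightarrow> 4 \<le> L \<Longrightarrow> \<exists>a b. b < L \<and> (b = a+2 \<or> (b = a+1 \<and> (a = 0 \<or> a+2 = L))) \<and>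
  ((zi L a = j \<and> zi L b = (if j+1<L then j+1 else 0)) \<or> (zi L b = j \<and> zi L a = (if j+1<L then j+1 else 0)))"
proof -
  assume h: "j < L" "4 \<le> L"
  consider "j + 1 = L" | "j + 1 < L" "2*j+2 < L" | "j + 1 < L" "L \<le> 2*j" | "L = 2*j+2" | "L = 2*j+1" "1 \<le> j"
    using h by linarith
  then show ?thesis
  proof cases
    case 1
    have "zi L (2*0) = 0" "zi L (2*0+1) = L - 1 - 0" by (rule zi_even, rule zi_odd)
    then show ?thesis using h 1 by (intro exI[of _ 0] exI[of _ 1]) simp
  next
    case 2
    have "zi L (2*j) = j" "zi L (2*(j+1)) = j+1" by (rule zi_even)+
    then show ?thesis using h 2 by (intro exI[of _ "2*j"] exI[of _ "2*(j+1)"]) simp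
  next
    case 3
    define q where "q = L - 2 - j"
    have q: "L - 1 - q = j + 1" "L - 1 - (q+1) = j" "2*(q+1)+1 < L" "2*(q+1)+1 = (2*q+1) + 2" using h 3 unfolding q_def by arith+
    have "zi L (2*q+1) = j + 1" "zi L (2*(q+1)+1) = j" using zi_odd[of L q] zi_odd[of L "q+1"] q by simp_all
    then show ?thesis using h 3 q by (intro exI[of _ "2*q+1"] exI[of _ "2*(q+1)+1"]) simp
  next
    case 4
    have "zi L (2*j) = j" "zi L (2*j+1) = L - 1 - j" by (rule zi_even, rule zi_odd)
    then show ?thesis using h 4 by (intro exI[of _ "2*j"] exI[of _ "2*j+1"]) simp
  next
    case 5
    have "zi L (2*(j-1)+1) = L - 1 - (j-1)" "zi L (2*j) = j" by (rule zi_odd, rule zi_even)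
    moreover have "2*(j-1)+1 + 1 = 2*j" using 5 by simp
    ultimately show ?thesis using h 5 by (intro exI[of _ "2*(j-1)+1"] exI[of _ "2*j"]) simp
  qed
qed


lemma edge_in: "two_regular V E \<Longrightarrow> {x,y} \<in> E \<Longrightarrow> x \<in> V \<and> y \<in> V \<and> x \<noteq> y"
proof -
  assume "two_regular V E" "{x,y} \<in> E"
  then obtain a b where ab: "a \<noteq> b" "a \<in> V" "b \<in> V" "{x,y} = {a,b}"
    unfolding two_regular_def simple_graph_def by blast
  then have "(x = a \<and> y = b) \<or> (x = b \<and> y = a)" by (simp add: doubleton_eq_iff)
  then show ?thesis using ab by blast
qed

lemma nbr_card: "two_regular V E \<Longrightarrow> x \<in> V \<Longrightarrow> finite {y. {x,y} \<in> E} \<and> card {y. {x,y} \<in> E} = 2"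
proof -
  assume "two_regular V E" "x \<in> V"
  then have c: "card {y. {x,y} \<in> E} = 2" unfolding two_regular_def degree_def by blast
  then have "finite {y. {x,y} \<in> E}" by (intro card_ge_0_finite) simp
  then show ?thesis using c by blast
qed

lemma no3:
  assumes "two_regular V E" "x \<in> V" "{x,a} \<in> E" "{x,b} \<in> E" "{x,c} \<in> E" "a \<noteq> b" "a \<noteq> c" "b \<noteq> c"
  shows False
proof -
  have f: "finite {y. {x,y} \<in> E}" and c: "card {y. {x,y} \<in> E} = 2" using nbr_card[OF assms(1,2)] by auto
  have "{a,b,c} \<subseteq> {y. {x,y} \<in> E}" using assms(3-5) by auto
  then have "card {a,b,c} \<le> 2" using card_mono[OF f] c by simp
  then show False using assms(6-8) by simp
qed

lemma other_nbr:
  assumes "two_regular V E" "x \<in> V"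
  shows "\<exists>u. {x,u} \<in> E \<and> u \<noteq> a"
proof (rule ccontr)
  assume "\<not> ?thesis"
  then have "{y. {x,y} \<in> E} \<subseteq> {a}" by auto
  then have "card {y. {x,y} \<in> E} \<le> card {a}" by (intro card_mono) simp_all
  then have "card {y. {x,y} \<in> E} \<le> 1" by simp
  then show False using nbr_card[OF assms] by simp
qed

lemma two_nbrs:
  assumes "two_regular V E" "x \<in> V" "{x,a} \<in> E" "{x,b} \<in> E" "a \<noteq> b" "{x,y} \<in> E"
  shows "y = a \<or> y = b"
  using no3[OF assms(1,2,3,4,6)] assms(5) by blast

definition ispath :: "'a set \<Rightarrow> 'a set set \<Rightarrow> 'a list \<Rightarrow> bool" where
  "ispath V E p \<longleftrightarrow> distinct p \<and> set p \<subseteq> V \<and> (\<forall>i. Suc i < length p \<longrightarrow> {p!i, p!Suc i} \<in> E)"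

lemma cyc_nbr:
  assumes tr: "two_regular V E" and cy: "is_cycle V E cs" and j: "j < length cs" and e: "{cs!j, z} \<in> E"
  shows "z = cs!((j+1) mod length cs) \<or> (\<exists>k<length cs. (k+1) mod length cs = j \<and> z = cs!k)"
proof -
  let ?L = "length cs"
  have L3: "3 \<le> ?L" and dist: "distinct cs" and sub: "set cs \<subseteq> V"
    and ed: "\<And>i. i < ?L \<Longrightarrow> {cs!i, cs!((i+1) mod ?L)} \<in> E"
    using cy unfolding is_cycle_def by auto
  have xV: "cs!j \<in> V" using sub j by auto
  show ?thesis
  proof (cases "j = 0")
    case True
    have e1: "{cs!j, cs!((j+1) mod ?L)} \<in> E" using ed[OF j] .
    have k0: "?L - 1 + 1 = ?L" using L3 by arith
    have k: "?L - 1 < ?L" "(?L - 1 + 1) mod ?L = j" using L3 True k0 by auto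
    have e2: "{cs!j, cs!(?L - 1)} \<in> E" using ed[OF k(1)] k(2) by (simp add: insert_commute)
    have ne: "cs!((j+1) mod ?L) \<noteq> cs!(?L - 1)"
      using True L3 dist by (simp add: nth_eq_iff_index_eq)
    show ?thesis using two_nbrs[OF tr xV e1 e2 ne e] k by blast
  next
    case False
    have e1: "{cs!j, cs!((j+1) mod ?L)} \<in> E" using ed[OF j] .
    have k: "j - 1 < ?L" "(j - 1 + 1) mod ?L = j" using j False by auto
    have e2: "{cs!j, cs!(j - 1)} \<in> E" using ed[OF k(1)] k(2) by (simp add: insert_commute)
    have "(j+1) mod ?L \<noteq> j - 1"
    proof (cases "j + 1 < ?L")
      case True then show ?thesis using False by simp
    next
      case F2: False
      then have "j + 1 = ?L" using j by simp
      then show ?thesis using L3 by simp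
    qed
    moreover have "(j+1) mod ?L < ?L" using L3 by (intro mod_less_divisor) linarith
    ultimately have ne: "cs!((j+1) mod ?L) \<noteq> cs!(j - 1)"
      using j L3 dist k(1) by (simp add: nth_eq_iff_index_eq)
    show ?thesis using two_nbrs[OF tr xV e1 e2 ne e] k by blast
  qed
qed

lemma cyc_closed:
  assumes "two_regular V E" "is_cycle V E cs" "x \<in> set cs" "{x, z} \<in> E"
  shows "z \<in> set cs"
proof -
  obtain j where j: "j < length cs" "x = cs!j" using assms(3) by (auto simp: in_set_conv_nth)
  have L: "0 < length cs" using j(1) by linarith
  have "{cs!j, z} \<in> E" using assms(4) j by simp
  from cyc_nbr[OF assms(1,2) j(1) this] show ?thesis
  proof
    assume "z = cs ! ((j + 1) mod length cs)"
    then show ?thesis using L by simp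
  next
    assume "\<exists>k<length cs. (k + 1) mod length cs = j \<and> z = cs ! k"
    then show ?thesis by auto
  qed
qed

lemma cyc_edge:
  assumes "two_regular V E" "is_cycle V E cs" "x \<in> set cs" "{x, z} \<in> E"
  shows "\<exists>j<length cs. {x,z} = {cs!j, cs!((j+1) mod length cs)}"
proof -
  obtain j where j: "j < length cs" "x = cs!j" using assms(3) by (auto simp: in_set_conv_nth)
  from cyc_nbr[OF assms(1,2) j(1)] assms(4) j show ?thesis
    by (auto simp: insert_commute)
qed

lemma find_cycle:
  assumes tr: "two_regular V E" and ne: "V \<noteq> {}"
  shows "\<exists>cs. is_cycle V E cs"
proof -
  have finV: "finite V" using tr unfolding two_regular_def simple_graph_def by auto
  obtain v where v: "v \<in> V" using ne by auto
  have "card {y. {v,y} \<in> E} = 2" using nbr_card[OF tr v] by auto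
  then have "{y. {v,y} \<in> E} \<noteq> {}" by (intro notI) simp
  then obtain a where a: "{v,a} \<in> E" by blast
  obtain b where b: "{v,b} \<in> E" "b \<noteq> a" using other_nbr[OF tr v] by blast
  have p0: "ispath V E [a,v,b]"
    unfolding ispath_def
  proof (intro conjI allI impI)
    show "distinct [a,v,b]" using edge_in[OF tr a] edge_in[OF tr b(1)] b(2) by auto
    show "set [a,v,b] \<subseteq> V" using edge_in[OF tr a] edge_in[OF tr b(1)] by auto
  next
    fix i assume "Suc i < length [a,v,b]"
    then have "i = 0 \<or> i = 1" by auto
    moreover have "{a,v} \<in> E" using a by (simp add: insert_commute)
    ultimately show "{[a,v,b] ! i, [a,v,b] ! Suc i} \<in> E" using b(1) by auto
  qed
  have bnd: "\<forall>p. ispath V E p \<longrightarrow> length p < Suc (card V)"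
  proof (intro allI impI)
    fix p assume "ispath V E p"
    then have "distinct p" "set p \<subseteq> V" unfolding ispath_def by auto
    then have "length p \<le> card V" using card_mono[OF finV] distinct_card by metis
    then show "length p < Suc (card V)" by simp
  qed
  obtain p where p: "ispath V E p" and pmax: "\<And>q. ispath V E q \<Longrightarrow> length q \<le> length p"
    using ex_has_greatest_nat[OF p0 bnd] by blast
  define m where "m = length p"
  have m3: "3 \<le> m" using pmax[OF p0] unfolding m_def by simp
  have dist: "distinct p" and sub: "set p \<subseteq> V" and ed: "\<And>i. Suc i < m \<Longrightarrow> {p!i, p!Suc i} \<in> E"
    using p unfolding ispath_def m_def by auto
  define x where "x = p!(m-1)"
  have xV: "x \<in> V" using sub m3 unfolding x_def m_def by auto
  have ex: "{x, p!(m-2)} \<in> E" using ed[of "m-2"] m3 unfolding x_def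
    by (simp add: insert_commute Suc_diff_Suc numeral_2_eq_2)
  obtain u where u: "{x,u} \<in> E" "u \<noteq> p!(m-2)" using other_nbr[OF tr xV] by blast
  have uin: "u \<in> set p"
  proof (rule ccontr)
    assume nu: "u \<notin> set p"
    have "ispath V E (p @ [u])"
      unfolding ispath_def
    proof (intro conjI allI impI)
      show "distinct (p @ [u])" using dist nu by simp
      show "set (p @ [u]) \<subseteq> V" using sub edge_in[OF tr u(1)] by auto
    next
      fix i assume i: "Suc i < length (p @ [u])"
      show "{(p @ [u]) ! i, (p @ [u]) ! Suc i} \<in> E"
      proof (cases "Suc i < m")
        case True then show ?thesis using ed[OF True] unfolding m_def by (simp add: nth_append)
      next
        case False
        then have i1: "Suc i = length p" "i < length p" using i unfolding m_def by auto
        then have "i = m - 1" unfolding m_def by simp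
        then have "(p @ [u]) ! i = x" using i1 unfolding x_def by (simp add: nth_append)
        moreover have "(p @ [u]) ! Suc i = u" using i1(1) by simp
        ultimately show ?thesis using u(1) by simp
      qed
    qed
    then have "length (p @ [u]) \<le> length p" using pmax by blast
    then show False by simp
  qed
  then obtain i where i: "i < m" "u = p!i" unfolding m_def in_set_conv_nth by blast
  have "u \<noteq> x" using edge_in[OF tr u(1)] by (metis)
  then have im1: "i \<noteq> m - 1" using i unfolding x_def by auto
  have im2: "i \<noteq> m - 2" using u(2) i by auto
  have i0: "i = 0"
  proof (rule ccontr)
    assume "i \<noteq> 0"
    have uV: "u \<in> V" using sub i unfolding m_def by auto
    have e1: "{u, p!(i-1)} \<in> E" using ed[of "i-1"] \<open>i \<noteq> 0\<close> i by (simp add: insert_commute)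
    have e2: "{u, p!(i+1)} \<in> E" using ed[of i] i im1 im2 by simp
    have e3: "{u, x} \<in> E" using u(1) by (simp add: insert_commute)
    have d1: "p!(i-1) \<noteq> p!(i+1)" using dist i im1 unfolding m_def by (simp add: nth_eq_iff_index_eq)
    have d2: "p!(i-1) \<noteq> x" using dist i \<open>i \<noteq> 0\<close> m3 unfolding x_def m_def by (simp add: nth_eq_iff_index_eq)
    have d3: "p!(i+1) \<noteq> x" using dist i im1 im2 m3 unfolding x_def m_def by (simp add: nth_eq_iff_index_eq)
    show False using no3[OF tr uV e1 e2 e3 d1 d2 d3] .
  qed
  have "is_cycle V E p"
    unfolding is_cycle_def
  proof (intro conjI allI impI)
    show "3 \<le> length p" using m3 unfolding m_def .
    show "distinct p" using dist .
    show "set p \<subseteq> V" using sub .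
  next
    fix k assume k: "k < length p"
    show "{p!k, p!((k+1) mod length p)} \<in> E"
    proof (cases "Suc k < m")
      case True then show ?thesis using ed[OF True] unfolding m_def by simp
    next
      case False
      then have "k = m - 1" using k unfolding m_def by simp
      then show ?thesis using u(1) i i0 m3 unfolding x_def m_def by simp
    qed
  qed
  then show ?thesis by blast
qed


lemma SE0L:
  assumes "4 \<le> L"
  shows "(a,b) \<in> SE {0,L} L \<longleftrightarrow> b < L \<and> (b = a+2 \<or> (b = a+1 \<and> (a = 0 \<or> a+2 = L)))"
proof
  assume "(a,b) \<in> SE {0,L} L"
  then show "b < L \<and> (b = a+2 \<or> (b = a+1 \<and> (a = 0 \<or> a+2 = L)))" unfolding SE_mem by auto
next
  assume h: "b < L \<and> (b = a+2 \<or> (b = a+1 \<and> (a = 0 \<or> a+2 = L)))"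
  then show "(a,b) \<in> SE {0,L} L" unfolding SE_mem by auto
qed

lemma SE_split:
  assumes S0: "0 \<in> S'" and gp: "gapped S'" and L: "30 \<le> L"
  shows "SE (insert 0 ((+) L ` S')) (L + n') = SE {0,L} L \<union> (\<lambda>(a,b). (a+L, b+L)) ` SE S' n'"
proof -
  define S where "S = insert 0 ((+) L ` S')"
  have memS: "s \<in> S \<longleftrightarrow> s = 0 \<or> (L \<le> s \<and> s - L \<in> S')" for s
  proof -
    have "s \<in> (+) L ` S' \<longleftrightarrow> L \<le> s \<and> s - L \<in> S'"
    proof
      assume "s \<in> (+) L ` S'"
      then obtain s' where "s' \<in> S'" "s = L + s'" by auto
      then show "L \<le> s \<and> s - L \<in> S'" by simp
    next
      assume h: "L \<le> s \<and> s - L \<in> S'"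
      then have "s = L + (s - L)" by simp
      then show "s \<in> (+) L ` S'" using h by (metis image_eqI)
    qed
    then show ?thesis unfolding S_def by simp
  qed
  have one: "1 \<notin> S'" using gp S0 unfolding gapped_def by fastforce
  have LS: "L \<in> S" using memS S0 by simp
  show ?thesis unfolding S_def[symmetric]
  proof (intro set_eqI iffI)
    fix x assume x: "x \<in> SE S (L + n')"
    obtain a b where ab: "x = (a,b)" by (cases x)
    have sab: "b < L + n'" "(b = a+2 \<and> (\<forall>s\<in>S. \<not>(a < s \<and> s \<le> b))) \<or> (b = a+1 \<and> (a\<in>S \<or> a+2 \<in> S))"
      using x unfolding ab SE_mem by auto
    consider "b < L" | "L \<le> a" | "a < L" "L \<le> b" by linarith
    then show "x \<in> SE {0,L} L \<union> (\<lambda>(a,b). (a+L, b+L)) ` SE S' n'"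
    proof cases
      case 1
      have "b = a+2 \<or> (b = a+1 \<and> (a = 0 \<or> a+2 = L))"
      proof (cases "b = a+2")
        case False
        then have b1: "b = a+1" "a \<in> S \<or> a+2 \<in> S" using sab by auto
        have "a = 0 \<or> a + 2 = L"
        proof (cases "a \<in> S")
          case True
          then show ?thesis using memS[of a] 1 b1(1) by auto
        next
          case False
          then have "a + 2 \<in> S" using b1(2) by simp
          then have "L \<le> a + 2" using memS[of "a+2"] by simp
          then show ?thesis using 1 b1(1) by simp
        qed
        then show ?thesis using b1 by simp
      qed simp
      then have "(a,b) \<in> SE {0,L} L" using SE0L[of L a b] L 1 by simp
      then show ?thesis using ab by simp
    next
      case 2
      have "(a - L, b - L) \<in> SE S' n'"
        unfolding SE_mem
      proof -
        have "a < b" using sab(2) by auto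
        then have bb: "b - L < n'" using sab(1) 2 by linarith
        show "b - L < n' \<and> ((b - L = a - L + 2 \<and> (\<forall>s\<in>S'. \<not> (a - L < s \<and> s \<le> b - L))) \<or>
               (b - L = a - L + 1 \<and> (a - L \<in> S' \<or> a - L + 2 \<in> S')))"
        proof (cases "b = a+2")
          case True
          then have "\<forall>s\<in>S. \<not>(a < s \<and> s \<le> b)" using sab by auto
          have "\<forall>s\<in>S'. \<not> (a - L < s \<and> s \<le> b - L)"
          proof (intro ballI notI)
            fix s assume s: "s \<in> S'" "a - L < s \<and> s \<le> b - L"
            have "L + s \<in> S" using memS[of "L+s"] s(1) by simp
            moreover have "a < L + s \<and> L + s \<le> b" using s(2) 2 True by linarith
            ultimately show False using \<open>\<forall>s\<in>S. \<not>(a < s \<and> s \<le> b)\<close> by blast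
          qed
          then show ?thesis using bb True 2 by auto
        next
          case False
          then have b1: "b = a+1" "a \<in> S \<or> a+2 \<in> S" using sab by auto
          have "a \<noteq> 0" using 2 L by linarith
          moreover have "a + 2 - L = a - L + 2" using 2 by simp
          ultimately have "a - L \<in> S' \<or> a - L + 2 \<in> S'" using b1(2) memS[of a] memS[of "a+2"] 2 by auto
          then show ?thesis using bb b1(1) 2 by auto
        qed
      qed
      moreover have "(a,b) = (\<lambda>(a,b). (a+L, b+L)) (a - L, b - L)" using 2 sab by auto
      ultimately show ?thesis using ab by blast
    next
      case 3
      show ?thesis
      proof (cases "b = a+2")
        case True
        then show ?thesis using sab LS 3 by auto
      next
        case False
        then have b1: "b = a+1" "a \<in> S \<or> a+2 \<in> S" using sab by auto
        then have "b = L" "a = L - 1" using 3 by auto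
        then have "a \<notin> S" using memS L by auto
        moreover have "a + 2 \<notin> S" using memS one \<open>a = L - 1\<close> L by auto
        ultimately show ?thesis using b1 by auto
      qed
    qed
  next
    fix x assume x: "x \<in> SE {0,L} L \<union> (\<lambda>(a,b). (a+L, b+L)) ` SE S' n'"
    then show "x \<in> SE S (L + n')"
    proof
      assume x1: "x \<in> SE {0,L} L"
      obtain a b where ab: "x = (a,b)" by (cases x)
      have h: "b < L" "b = a+2 \<or> (b = a+1 \<and> (a = 0 \<or> a+2 = L))" using x1 SE0L[of L a b] L ab by auto
      have "\<forall>s\<in>S. \<not>(a < s \<and> s \<le> a+2)" if "b = a+2" using memS h that by auto
      moreover have "0 \<in> S" "L \<in> S" using memS LS by auto
      ultimately show ?thesis using h unfolding ab SE_mem by auto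
    next
      assume "x \<in> (\<lambda>(a,b). (a+L, b+L)) ` SE S' n'"
      then obtain a b where ab: "x = (a+L, b+L)" "(a,b) \<in> SE S' n'" by auto
      have h: "b < n'" "(b = a+2 \<and> (\<forall>s\<in>S'. \<not>(a < s \<and> s \<le> b))) \<or> (b = a+1 \<and> (a\<in>S' \<or> a+2 \<in> S'))"
        using ab(2) unfolding SE_mem by auto
      have "(b + L = a + L + 2 \<and> (\<forall>s\<in>S. \<not>(a + L < s \<and> s \<le> b + L))) \<or> (b + L = a + L + 1 \<and> (a + L \<in> S \<or> a + L + 2 \<in> S))"
      proof (cases "b = a+2")
        case True
        then have "\<forall>s\<in>S'. \<not>(a < s \<and> s \<le> b)" using h by auto
        have "\<forall>s\<in>S. \<not>(a + L < s \<and> s \<le> b + L)"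
        proof (intro ballI notI)
          fix s assume s: "s \<in> S" "a + L < s \<and> s \<le> b + L"
          then have "s \<noteq> 0" by auto
          then have "L \<le> s" "s - L \<in> S'" using memS[of s] s(1) by auto
          moreover have "a < s - L \<and> s - L \<le> b" using s(2) \<open>L \<le> s\<close> by linarith
          ultimately show False using \<open>\<forall>s\<in>S'. \<not>(a < s \<and> s \<le> b)\<close> by blast
        qed
        then show ?thesis using True by simp
      next
        case False
        then have "b = a+1" "a\<in>S' \<or> a+2 \<in> S'" using h by auto
        then show ?thesis using memS by auto
      qed
      then show ?thesis using h(1) unfolding ab(1) SE_mem by auto
    qed
  qed
qed


lemma linearize:
  fixes V :: "'a set" and E :: "'a set set"
  assumes "two_regular V E" "\<forall>cs. is_cycle V E cs \<longrightarrow> 30 \<le> length cs"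
  shows "\<exists>g S. bij_betw g {0..<card V} V \<and> 0 \<in> S \<and> card V \<in> S \<and> gapped S \<and>
           E = (\<lambda>(a,b). {g a, g b}) ` SE S (card V)"
  using assms
proof (induction "card V" arbitrary: V E rule: less_induct)
  case less
  have tr: "two_regular V E" and cyc30: "\<forall>cs. is_cycle V E cs \<longrightarrow> 30 \<le> length cs" using less.prems by auto
  have finV: "finite V" using tr unfolding two_regular_def simple_graph_def by auto
  show ?case
  proof (cases "V = {}")
    case True
    have E0: "E = {}" using tr True unfolding two_regular_def simple_graph_def by blast
    have "SE {0} 0 = {}" unfolding SE_def by auto
    moreover have "gapped {0}" unfolding gapped_def by auto
    ultimately show ?thesis using True E0 by (intro exI[of _ "\<lambda>_. undefined"] exI[of _ "{0}"]) (simp add: bij_betw_def)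
  next
    case False
    obtain cs where cy: "is_cycle V E cs" using find_cycle[OF tr False] by blast
    define L where "L = length cs"
    define C where "C = set cs"
    define V' where "V' = V - C"
    define E' where "E' = {e\<in>E. e \<inter> C = {}}"
    have L30: "30 \<le> L" using cyc30 cy unfolding L_def by blast
    have dist: "distinct cs" and CV: "C \<subseteq> V" using cy unfolding is_cycle_def C_def by auto
    have cardC: "card C = L" using distinct_card[OF dist] unfolding C_def L_def .
    have clos: "\<And>x z. x \<in> C \<Longrightarrow> {x,z} \<in> E \<Longrightarrow> z \<in> C" using cyc_closed[OF tr cy] unfolding C_def by blast
    have tr': "two_regular V' E'"
      unfolding two_regular_def
    proof (intro conjI)
      show "simple_graph V' E'" unfolding simple_graph_def
      proof (intro conjI ballI)
        show "finite V'" using finV unfolding V'_def by simp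
        fix e assume e: "e \<in> E'"
        then have eE: "e \<in> E" and eC: "e \<inter> C = {}" unfolding E'_def by auto
        then obtain x y where "x \<noteq> y" "x \<in> V" "y \<in> V" "e = {x,y}" using tr unfolding two_regular_def simple_graph_def by blast
        then show "\<exists>x y. x \<noteq> y \<and> x \<in> V' \<and> y \<in> V' \<and> e = {x, y}" using eC unfolding V'_def by blast
      qed
      show "\<forall>x\<in>V'. degree E' x = 2"
      proof
        fix x assume x: "x \<in> V'"
        have xC: "x \<notin> C" using x unfolding V'_def by auto
        have "{y. {x,y} \<in> E'} = {y. {x,y} \<in> E}"
        proof (intro set_eqI iffI)
          fix y assume "y \<in> {y. {x,y} \<in> E'}" then show "y \<in> {y. {x,y} \<in> E}" unfolding E'_def by auto
        next
          fix y assume y: "y \<in> {y. {x,y} \<in> E}"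
          have "y \<notin> C"
          proof
            assume "y \<in> C"
            moreover have "{y,x} \<in> E" using y by (simp add: insert_commute)
            ultimately have "x \<in> C" using clos by blast
            then show False using xC by simp
          qed
          then show "y \<in> {y. {x,y} \<in> E'}" using y xC unfolding E'_def by auto
        qed
        moreover have "degree E x = 2" using tr x unfolding two_regular_def V'_def by auto
        ultimately show "degree E' x = 2" unfolding degree_def by simp
      qed
    qed
    have cyc30': "\<forall>cs. is_cycle V' E' cs \<longrightarrow> 30 \<le> length cs"
    proof (intro allI impI)
      fix cs' assume "is_cycle V' E' cs'"
      then have "is_cycle V E cs'" unfolding is_cycle_def V'_def E'_def by auto
      then show "30 \<le> length cs'" using cyc30 by blast
    qed
    have finC: "finite C" using finite_subset[OF CV finV] .
    have cardV: "card V = L + card V'"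
      using card_Diff_subset[OF finC CV] card_mono[OF finV CV] cardC unfolding V'_def by simp
    have lt: "card V' < card V" using cardV L30 by simp
    obtain g' S' where g': "bij_betw g' {0..<card V'} V'" and S'0: "0 \<in> S'" and S'n: "card V' \<in> S'"
      and gS': "gapped S'" and E'eq: "E' = (\<lambda>(a,b). {g' a, g' b}) ` SE S' (card V')"
      using less.hyps[OF lt tr' cyc30'] by blast
    define n' where "n' = card V'"
    define g where "g k = (if k < L then cs ! zi L k else g' (k - L))" for k
    define S where "S = insert 0 ((+) L ` S')"
    have zinj: "inj_on (zi L) {..<L}" by (rule inj_onI) (auto intro: zi_inj)
    have zbij: "bij_betw (zi L) {..<L} {..<L}"
      unfolding bij_betw_def using zinj endo_inj_surj[of "{..<L}" "zi L"] zi_lt by auto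
    have b1: "bij_betw g {..<L} C"
    proof -
      have bn: "bij_betw ((!) cs) {..<L} C" using bij_betw_nth[OF dist] unfolding L_def C_def by simp
      have "bij_betw ((!) cs \<circ> zi L) {..<L} C"
        using bij_betw_trans[OF zbij bn] .
      moreover have "\<And>k. k \<in> {..<L} \<Longrightarrow> ((!) cs \<circ> zi L) k = g k" unfolding g_def by simp
      ultimately show ?thesis using bij_betw_cong by blast
    qed
    have b2: "bij_betw g {L..<L+n'} V'"
    proof -
      have sh: "bij_betw (\<lambda>k. k - L) {L..<L+n'} {0..<n'}"
        by (rule bij_betw_byWitness[where f'="\<lambda>k. k + L"]) auto
      have "bij_betw (g' \<circ> (\<lambda>k. k - L)) {L..<L+n'} V'" using bij_betw_trans[OF sh g'[folded n'_def]] .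
      moreover have "\<And>k. k \<in> {L..<L+n'} \<Longrightarrow> (g' \<circ> (\<lambda>k. k - L)) k = g k" unfolding g_def by simp
      ultimately show ?thesis using bij_betw_cong by blast
    qed
    have bij: "bij_betw g {0..<card V} V"
    proof -
      have "{0..<card V} = {..<L} \<union> {L..<L+n'}" using cardV unfolding n'_def by auto
      moreover have "V = C \<union> V'" using CV unfolding V'_def by auto
      moreover have "C \<inter> V' = {}" unfolding V'_def by auto
      ultimately show ?thesis using bij_betw_combine[OF b1 b2] by simp
    qed
    have S0: "0 \<in> S" unfolding S_def by simp
    have Sn: "card V \<in> S" using S'n cardV unfolding S_def by simp
    have gS: "gapped S"
      unfolding gapped_def
    proof (intro ballI impI)
      fix s s' assume s: "s \<in> S" "s' \<in> S" "s < s'"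
      then have "s' \<noteq> 0" by auto
      then obtain y where y: "y \<in> S'" "s' = L + y" using s(2) unfolding S_def by auto
      show "s + 30 \<le> s'"
      proof (cases "s = 0")
        case True then show ?thesis using y L30 by simp
      next
        case False
        then obtain x where x: "x \<in> S'" "s = L + x" using s(1) unfolding S_def by auto
        then have "x < y" using y s(3) by simp
        then have "x + 30 \<le> y" using gS' x(1) y(1) unfolding gapped_def by blast
        then show ?thesis using x y by simp
      qed
    qed
    define h where "h = (\<lambda>(a,b). {g a, g b})"
    have SEs: "SE S (card V) = SE {0,L} L \<union> (\<lambda>(a,b). (a+L, b+L)) ` SE S' n'"
      unfolding S_def cardV n'_def using SE_split[OF S'0 gS' L30] by simp
    have part2: "h ` ((\<lambda>(a,b). (a+L, b+L)) ` SE S' n') = E'"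
    proof -
      have "h ` ((\<lambda>(a,b). (a+L, b+L)) ` SE S' n') = (\<lambda>(a,b). {g' a, g' b}) ` SE S' n'"
        unfolding image_image h_def by (intro image_cong refl) (auto simp: g_def split: prod.splits)
      then show ?thesis using E'eq unfolding n'_def by simp
    qed
    have Ecyc: "{e\<in>E. e \<inter> C \<noteq> {}} = (\<lambda>j. {cs!j, cs!((j+1) mod L)}) ` {..<L}"
    proof (intro set_eqI iffI)
      fix e assume e: "e \<in> {e\<in>E. e \<inter> C \<noteq> {}}"
      then obtain x y where xy: "e = {x,y}" using tr unfolding two_regular_def simple_graph_def by blast
      from e xy have "x \<in> C \<or> y \<in> C" by auto
      then obtain u w where uw: "e = {u,w}" "u \<in> C" using xy by (auto simp: insert_commute)
      then obtain j where "j < L" "{u,w} = {cs!j, cs!((j+1) mod L)}"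
        using cyc_edge[OF tr cy, of u w] e unfolding C_def L_def by auto
      then show "e \<in> (\<lambda>j. {cs!j, cs!((j+1) mod L)}) ` {..<L}" using uw by auto
    next
      fix e assume "e \<in> (\<lambda>j. {cs!j, cs!((j+1) mod L)}) ` {..<L}"
      then obtain j where j: "j < L" "e = {cs!j, cs!((j+1) mod L)}" by auto
      have "e \<in> E" using cy j unfolding is_cycle_def L_def by auto
      moreover have "cs!j \<in> C" using j unfolding C_def L_def by auto
      ultimately show "e \<in> {e\<in>E. e \<inter> C \<noteq> {}}" using j by auto
    qed
    have modL: "(j+1) mod L = (if j+1 < L then j+1 else 0)" if "j < L" for j
    proof (cases "j + 1 < L")
      case False
      then have "j + 1 = L" using that by simp
      then show ?thesis by simp
    qed simp
    have part1: "h ` SE {0,L} L = (\<lambda>j. {cs!j, cs!((j+1) mod L)}) ` {..<L}"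
    proof (intro set_eqI iffI)
      fix e assume "e \<in> h ` SE {0,L} L"
      then obtain a b where ab: "(a,b) \<in> SE {0,L} L" "e = {g a, g b}" unfolding h_def by auto
      have c: "b < L" "b = a+2 \<or> (b = a+1 \<and> (a = 0 \<or> a+2 = L))" using ab(1) SE0L[of L a b] L30 by auto
      then have aL: "a < L" by auto
      have ga: "g a = cs!(zi L a)" "g b = cs!(zi L b)" using aL c(1) unfolding g_def by auto
      have L4: "4 \<le> L" using L30 by simp
      obtain j where j: "j < L" "(zi L a = j \<and> zi L b = (if j+1<L then j+1 else 0)) \<or> (zi L b = j \<and> zi L a = (if j+1<L then j+1 else 0))"
        using Z1[OF c(1) L4 c(2)] by blast
      have "e = {cs!j, cs!((j+1) mod L)}"
        using j(2)
      proof
        assume "zi L a = j \<and> zi L b = (if j+1<L then j+1 else 0)"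
        then show ?thesis using ab(2) ga modL[OF j(1)] by simp
      next
        assume "zi L b = j \<and> zi L a = (if j+1<L then j+1 else 0)"
        then show ?thesis using ab(2) ga modL[OF j(1)] by (simp add: insert_commute)
      qed
      then show "e \<in> (\<lambda>j. {cs!j, cs!((j+1) mod L)}) ` {..<L}" using j(1) by auto
    next
      fix e assume "e \<in> (\<lambda>j. {cs!j, cs!((j+1) mod L)}) ` {..<L}"
      then obtain j where j: "j < L" "e = {cs!j, cs!((j+1) mod L)}" by auto
      have L4: "4 \<le> L" using L30 by simp
      obtain a b where ab: "b < L" "b = a+2 \<or> (b = a+1 \<and> (a = 0 \<or> a+2 = L))"
        "(zi L a = j \<and> zi L b = (if j+1<L then j+1 else 0)) \<or> (zi L b = j \<and> zi L a = (if j+1<L then j+1 else 0))"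
        using Z2[OF j(1) L4] by blast
      have SEab: "(a,b) \<in> SE {0,L} L" using SE0L[of L a b] L4 ab(1,2) by simp
      have aL: "a < L" using ab(1,2) by auto
      have ga: "g a = cs!(zi L a)" "g b = cs!(zi L b)" using aL ab(1) unfolding g_def by auto
      have "e = h (a,b)"
        using ab(3)
      proof
        assume "zi L a = j \<and> zi L b = (if j+1<L then j+1 else 0)"
        then show ?thesis unfolding h_def using j(2) ga modL[OF j(1)] by simp
      next
        assume "zi L b = j \<and> zi L a = (if j+1<L then j+1 else 0)"
        then show ?thesis unfolding h_def using j(2) ga modL[OF j(1)] by (simp add: insert_commute)
      qed
      then show "e \<in> h ` SE {0,L} L" using SEab by blast
    qed
    have Esplit: "E = {e\<in>E. e \<inter> C \<noteq> {}} \<union> E'" unfolding E'_def by auto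
    have Eeq: "E = h ` SE S (card V)" using Esplit Ecyc part1 part2 SEs by (simp add: image_Un)
    show ?thesis using bij S0 Sn gS Eeq unfolding h_def by blast
  qed
qed


theorem lemma4p10:
  fixes V :: "'a set" and E :: "'a set set" and n t :: nat and ns :: "nat \<Rightarrow> nat"
  assumes "two_regular V E"
    and "card V = n"
    and "\<forall>cs. is_cycle V E cs \<longrightarrow> length cs \<ge> 30"
    and "(\<Sum>i = 1..t. ns i) = n"
    and "\<forall>i\<in>{1..t}. ns i \<ge> 50"
  shows "\<exists>f :: 'a \<Rightarrow> nat.
           (\<forall>x\<in>V. f x \<in> {1..t}) \<and>
           (\<forall>i\<in>{1..t}. card {x\<in>V. f x = i} = ns i) \<and>
           (\<forall>x y. {x, y} \<in> E \<longrightarrow> \<bar>int (f x) - int (f y)\<bar> \<le> 1) \<and>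
           induced_matching E {e\<in>E. \<exists>x y. e = {x, y} \<and> f x \<noteq> f y} \<and>
           (\<forall>i\<in>{1..<t}. card {e\<in>E. \<exists>x y. e = {x, y} \<and> {f x, f y} = {i, i + 1}} = 4)"
proof (cases "t = 0")
  case True
  then have n0: "n = 0" using assms(4) by simp
  have finV: "finite V" using assms(1) unfolding two_regular_def simple_graph_def by auto
  then have V0: "V = {}" using assms(2) n0 by simp
  have E0: "E = {}" using assms(1) V0 unfolding two_regular_def simple_graph_def by blast
  show ?thesis using True V0 E0 by (intro exI[of _ "\<lambda>_. 1"]) (simp add: induced_matching_def)
next
  case False
  then have t1: "1 \<le> t" by simp
  obtain g S where g: "bij_betw g {0..<n} V" and S0: "0 \<in> S" and Sn: "n \<in> S" and gS: "gapped S"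
    and Eeq: "E = (\<lambda>(a,b). {g a, g b}) ` SE S n"
    using linearize[OF assms(1,3)] assms(2) by blast
  have big: "\<forall>i\<in>{1..t}. 50 \<le> ns i" using assms(5) by simp
  obtain lab where L1: "\<forall>p. lab p \<in> {1..t}" and L2: "\<forall>i\<in>{1..t}. card {p\<in>{0..<n}. lab p = i} = ns i"
    and L3: "\<forall>a b. (a,b) \<in> SE S n \<longrightarrow> \<bar>int (lab a) - int (lab b)\<bar> \<le> 1"
    and L4: "\<forall>a b a' b'. (a,b) \<in> SE S n \<longrightarrow> lab a \<noteq> lab b \<longrightarrow> (a',b') \<in> SE S n \<longrightarrow> lab a' \<noteq> lab b' \<longrightarrow> (a,b) \<noteq> (a',b') \<longrightarrow>
        {a,b} \<inter> {a',b'} = {} \<and> (\<forall>p\<in>{a,b}. \<forall>q\<in>{a',b'}. (p,q) \<notin> SE S n \<and> (q,p) \<notin> SE S n)"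
    and L5: "\<forall>i\<in>{1..<t}. card {(a,b)\<in>SE S n. {lab a, lab b} = {i, i+1}} = 4"
    using partB_ex[OF S0 Sn gS t1 assms(4) big] by blast
  have inj: "inj_on g {0..<n}" and img: "g ` {0..<n} = V" using g unfolding bij_betw_def by auto
  define f where "f x = lab (the_inv_into {0..<n} g x)" for x
  have fg: "f (g a) = lab a" if "a < n" for a using the_inv_into_f_f[OF inj] that unfolding f_def by simp
  have SEn: "a < n \<and> b < n \<and> a < b" if "(a,b) \<in> SE S n" for a b using SE_lt[OF that] by auto
  have Emem: "e \<in> E \<longleftrightarrow> (\<exists>a b. (a,b) \<in> SE S n \<and> e = {g a, g b})" for e using Eeq by auto
  have geq: "{g a, g b} = {g a', g b'} \<longleftrightarrow> {a,b} = {a',b'}" if "a < n" "b < n" "a' < n" "b' < n" for a b a' b'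
  proof -
    have "{g a, g b} = g ` {a,b}" "{g a', g b'} = g ` {a',b'}" by auto
    then show ?thesis using inj_on_image_eq_iff[OF inj, of "{a,b}" "{a',b'}"] that by auto
  qed
  have fpair: "{f x, f y} = {lab a, lab b}" if "{x,y} = {g a, g b}" "a < n" "b < n" for x y a b
  proof -
    have "(x = g a \<and> y = g b) \<or> (x = g b \<and> y = g a)" using that(1) by (simp add: doubleton_eq_iff)
    then show ?thesis using fg that(2,3) by auto
  qed
  have feq: "f x = f y \<longleftrightarrow> lab a = lab b" if "{x,y} = {g a, g b}" "a < n" "b < n" for x y a b
  proof -
    have "(x = g a \<and> y = g b) \<or> (x = g b \<and> y = g a)" using that(1) by (simp add: doubleton_eq_iff)
    then show ?thesis using fg that(2,3) by auto
  qed
  have P1: "\<forall>x\<in>V. f x \<in> {1..t}" unfolding f_def using L1 by blast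
  have P2: "\<forall>i\<in>{1..t}. card {x\<in>V. f x = i} = ns i"
  proof
    fix i assume i: "i \<in> {1..t}"
    have "{x\<in>V. f x = i} = g ` {p\<in>{0..<n}. lab p = i}"
    proof (intro set_eqI iffI)
      fix x assume x: "x \<in> {x\<in>V. f x = i}"
      then obtain a where a: "a < n" "x = g a" using img by auto
      then show "x \<in> g ` {p\<in>{0..<n}. lab p = i}" using x fg by auto
    next
      fix x assume "x \<in> g ` {p\<in>{0..<n}. lab p = i}"
      then obtain a where a: "a < n" "x = g a" "lab a = i" by auto
      then show "x \<in> {x\<in>V. f x = i}" using fg img by auto
    qed
    moreover have "inj_on g {p\<in>{0..<n}. lab p = i}" by (rule inj_on_subset[OF inj]) auto
    ultimately have "card {x\<in>V. f x = i} = card {p\<in>{0..<n}. lab p = i}" using card_image by metis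
    then show "card {x\<in>V. f x = i} = ns i" using L2 i by simp
  qed
  have P3: "\<forall>x y. {x, y} \<in> E \<longrightarrow> \<bar>int (f x) - int (f y)\<bar> \<le> 1"
  proof (intro allI impI)
    fix x y assume "{x,y} \<in> E"
    then obtain a b where ab: "(a,b) \<in> SE S n" "{x,y} = {g a, g b}" using Emem by blast
    have "(x = g a \<and> y = g b) \<or> (x = g b \<and> y = g a)" using ab(2) by (simp add: doubleton_eq_iff)
    moreover have "\<bar>int (lab a) - int (lab b)\<bar> \<le> 1" using L3 ab(1) by blast
    ultimately show "\<bar>int (f x) - int (f y)\<bar> \<le> 1" using fg SEn[OF ab(1)] by auto
  qed
  have P4: "induced_matching E {e\<in>E. \<exists>x y. e = {x, y} \<and> f x \<noteq> f y}"
    unfolding induced_matching_def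
  proof (intro conjI)
    show "{e\<in>E. \<exists>x y. e = {x, y} \<and> f x \<noteq> f y} \<subseteq> E" by auto
  next
    let ?M = "{e\<in>E. \<exists>x y. e = {x, y} \<and> f x \<noteq> f y}"
    show "\<forall>e\<in>?M. \<forall>e'\<in>?M. e \<noteq> e' \<longrightarrow> e \<inter> e' = {} \<and> (\<forall>x\<in>e. \<forall>y\<in>e'. {x, y} \<notin> E)"
    proof (intro ballI impI)
    fix e e' assume e: "e \<in> {e\<in>E. \<exists>x y. e = {x, y} \<and> f x \<noteq> f y}" and e': "e' \<in> {e\<in>E. \<exists>x y. e = {x, y} \<and> f x \<noteq> f y}"
      and ne: "e \<noteq> e'"
    obtain a b where ab: "(a,b) \<in> SE S n" "e = {g a, g b}" using e Emem by blast
    obtain a' b' where ab': "(a',b') \<in> SE S n" "e' = {g a', g b'}" using e' Emem by blast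
    obtain x y where xy: "e = {x,y}" "f x \<noteq> f y" using e by blast
    obtain x' y' where xy': "e' = {x',y'}" "f x' \<noteq> f y'" using e' by blast
    have n1: "a < n" "b < n" using SEn[OF ab(1)] by auto
    have n2: "a' < n" "b' < n" using SEn[OF ab'(1)] by auto
    have l1: "lab a \<noteq> lab b" using feq[of x y a b] xy ab(2) n1 by simp
    have l2: "lab a' \<noteq> lab b'" using feq[of x' y' a' b'] xy' ab'(2) n2 by simp
    have "(a,b) \<noteq> (a',b')" using ne ab(2) ab'(2) by auto
    then have D: "{a,b} \<inter> {a',b'} = {}" and N: "\<forall>p\<in>{a,b}. \<forall>q\<in>{a',b'}. (p,q) \<notin> SE S n \<and> (q,p) \<notin> SE S n"
      using L4 ab(1) ab'(1) l1 l2 by blast+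
    have "e \<inter> e' = g ` ({a,b} \<inter> {a',b'})"
    proof -
      have "g ` ({a,b} \<inter> {a',b'}) = g ` {a,b} \<inter> g ` {a',b'}"
        by (rule inj_on_image_Int[OF inj]) (use n1 n2 in auto)
      then show ?thesis using ab(2) ab'(2) by auto
    qed
    then have I: "e \<inter> e' = {}" using D by simp
    have II: "\<forall>x\<in>e. \<forall>y\<in>e'. {x, y} \<notin> E"
    proof (intro ballI notI)
      fix u w assume u: "u \<in> e" and w: "w \<in> e'" and uw: "{u,w} \<in> E"
      obtain p where p: "p \<in> {a,b}" "u = g p" using u ab(2) by auto
      obtain q where q: "q \<in> {a',b'}" "w = g q" using w ab'(2) by auto
      obtain c d where cd: "(c,d) \<in> SE S n" "{u,w} = {g c, g d}" using uw Emem by blast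
      have pn: "p < n" "q < n" using p(1) q(1) n1 n2 by auto
      have cdn: "c < n" "d < n" using SEn[OF cd(1)] by auto
      have "{p,q} = {c,d}" using geq[OF pn cdn] cd(2) p(2) q(2) by simp
      then have "(c,d) = (p,q) \<or> (c,d) = (q,p)" by (auto simp: doubleton_eq_iff)
      then show False using N p(1) q(1) cd(1) by blast
    qed
    show "e \<inter> e' = {} \<and> (\<forall>x\<in>e. \<forall>y\<in>e'. {x, y} \<notin> E)" using I II by blast
    qed
  qed
  have P5: "\<forall>i\<in>{1..<t}. card {e\<in>E. \<exists>x y. e = {x, y} \<and> {f x, f y} = {i, i + 1}} = 4"
  proof
    fix i assume i: "i \<in> {1..<t}"
    define h where "h = (\<lambda>(a,b). {g a, g b})"
    define Y where "Y = {(a,b)\<in>SE S n. {lab a, lab b} = {i, i+1}}"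
    have injh: "inj_on h Y"
    proof (rule inj_onI)
      fix u v assume u: "u \<in> Y" and v: "v \<in> Y" and huv: "h u = h v"
      obtain a b where ab: "u = (a,b)" "(a,b) \<in> SE S n" using u unfolding Y_def by auto
      obtain a' b' where ab': "v = (a',b')" "(a',b') \<in> SE S n" using v unfolding Y_def by auto
      have n1: "a < n" "b < n" "a < b" using SEn[OF ab(2)] by auto
      have n2: "a' < n" "b' < n" "a' < b'" using SEn[OF ab'(2)] by auto
      have "{a,b} = {a',b'}" using geq[OF n1(1,2) n2(1,2)] huv ab(1) ab'(1) unfolding h_def by simp
      then have "(a = a' \<and> b = b') \<or> (a = b' \<and> b = a')" by (simp add: doubleton_eq_iff)
      then show "u = v" using n1(3) n2(3) ab(1) ab'(1) by auto
    qed
    have "{e\<in>E. \<exists>x y. e = {x, y} \<and> {f x, f y} = {i, i + 1}} = h ` Y"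
    proof (intro set_eqI iffI)
      fix e assume e: "e \<in> {e\<in>E. \<exists>x y. e = {x, y} \<and> {f x, f y} = {i, i + 1}}"
      obtain a b where ab: "(a,b) \<in> SE S n" "e = {g a, g b}" using e Emem by blast
      obtain x y where xy: "e = {x,y}" "{f x, f y} = {i, i+1}" using e by blast
      have n1: "a < n" "b < n" using SEn[OF ab(1)] by auto
      have "{lab a, lab b} = {i, i+1}" using fpair[of x y a b] xy ab(2) n1 by simp
      then have "(a,b) \<in> Y" using ab(1) unfolding Y_def by simp
      then show "e \<in> h ` Y" using ab(2) unfolding h_def by force
    next
      fix e assume "e \<in> h ` Y"
      then obtain a b where ab: "(a,b) \<in> SE S n" "{lab a, lab b} = {i, i+1}" "e = {g a, g b}"
        unfolding Y_def h_def by auto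
      have n1: "a < n" "b < n" using SEn[OF ab(1)] by auto
      have "e \<in> E" using Emem ab(1) ab(3) by blast
      moreover have "{f (g a), f (g b)} = {i, i+1}" using fg n1 ab(2) by simp
      ultimately show "e \<in> {e\<in>E. \<exists>x y. e = {x, y} \<and> {f x, f y} = {i, i + 1}}" using ab(3) by blast
    qed
    then show "card {e\<in>E. \<exists>x y. e = {x, y} \<and> {f x, f y} = {i, i + 1}} = 4"
      using card_image[OF injh] L5 i unfolding Y_def by simp
  qed
  show ?thesis using P1 P2 P3 P4 P5 by blast
qed


end
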